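(* Under the standing setup and the algorithm/assumptions described in the context, $\displaystyle\liminf_{n\to\infty}\mathcal{M}_{\bar\gamma}^{F_n,\phi}(x_n)=0$.
   Context: Standing setup: $\mathcal{X},\mathcal{Z}$ finite-dimensional real Hilbert spaces; $\phi:\mathcal{X}\to\mathbb{R}\cup\{+\infty\}$ proper lower semicontinuous convex; $h:\mathcal{X}\to\mathbb{R}$ differentiable with $\nabla h$ Lipschitz on $\mathrm{dom}\,\phi$; $\mathfrak{S}:\mathcal{X}\to\mathcal{Z}$ continuously differentiable; $g:\mathcal{Z}\to\mathbb{R}$ Lipschitz with constant $L_g>0$ and $\eta$-weakly convex ($g+\frac\eta2\|\cdot\|^2$ convex, $\eta>0$); $F:=h+g\circ\mathfrak{S}$ and $\mathrm{argmin}_x(F+\phi)\ne\emptyset$. Notation: $\mathrm{prox}_{\gamma\phi}(\bar x)=\mathrm{argmin}_x(\phi(x)+\frac1{2\gamma}\|x-\bar x\|^2)$; Moreau envelope ${}^{\mu}g(\bar z)=\min_z(g(z)+\frac1{2\mu}\|z-\bar z\|^2)$ for $\mu\in(0,\eta^{-1})$. $F_n:=h+{}^{\mu_n}g\circ\mathfrak{S}$, and $\mathcal{M}_\gamma^{F_n,\phi}(x)=\|(x-\mathrm{prox}_{\gamma\phi}(x-\gamma\nabla F_n(x)))/\gamma\|$. Algorithm and assumptions: fix $x_1\in\mathrm{dom}\,\phi$ and $c\in(0,1)$. (a) $(\mu_n)\subset(0,\frac{1}{2\eta}]$ with $\mu_n\to0$, $\sum_n\mu_n=+\infty$, and $M^{-1}\le\mu_{n+1}/\mu_n\le1$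 for some $M\ge1$. (b) Each $\nabla F_n$ is Lipschitz on $\mathrm{dom}\,\phi$ with constant $L_{\nabla F_n}=\varpi_1+\varpi_2\mu_n^{-1}$, $\varpi_1\ge0$, $\varpi_2>0$ fixed. (c) $\gamma_n>0$ satisfies $(F_n+\phi)(\mathrm{prox}_{\gamma_n\phi}(x_n-\gamma_n\nabla F_n(x_n)))\le(F_n+\phi)(x_n)-c\gamma_n(\mathcal{M}_{\gamma_n}^{F_n,\phi}(x_n))^2$ and $\beta L_{\nabla F_n}^{-1}\le\gamma_n\le\bar\gamma$ for fixed $\beta,\bar\gamma>0$. (d) $x_{n+1}=\mathrm{prox}_{\gamma_n\phi}(x_n-\gamma_n\nabla F_n(x_n))$. *)

theory Defs
  imports "HOL-Analysis.Analysis"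
begin

definition edom :: "('a \<Rightarrow> ereal) \<Rightarrow> 'a set" where
  "edom \<phi> = {x. \<phi> x < \<infinity>}"

definition proper_fun :: "('a \<Rightarrow> ereal) \<Rightarrow> bool" where
  "proper_fun \<phi> \<longleftrightarrow> (\<forall>x. \<phi> x \<noteq> -\<infinity>) \<and> (\<exists>x. \<phi> x < \<infinity>)"

definition epi :: "('a \<Rightarrow> ereal) \<Rightarrow> ('a \<times> real) set" where
  "epi \<phi> = {(x, t). \<phi> x \<le> ereal t}"

definition convex_fun :: "('a::real_vector \<Rightarrow> ereal) \<Rightarrow> bool" where
  "convex_fun \<phi> \<longleftrightarrow> convex (epi \<phi>)"

definition lsc_fun :: "('a::topological_space \<Rightarrow> ereal) \<Rightarrow> bool" where
  "lsc_fun \<phi> \<longleftrightarrow> closed (epi \<phi>)"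

definition grad :: "('a::real_inner \<Rightarrow> real) \<Rightarrow> 'a \<Rightarrow> 'a" where
  "grad f x = (SOME v. (f has_derivative (\<lambda>d. v \<bullet> d)) (at x))"

definition prox :: "real \<Rightarrow> ('a::real_normed_vector \<Rightarrow> ereal) \<Rightarrow> 'a \<Rightarrow> 'a" where
  "prox \<gamma> \<phi> xb = (THE p. \<forall>y. \<phi> p + ereal (1 / (2 * \<gamma>) * (norm (p - xb))\<^sup>2)
                               \<le> \<phi> y + ereal (1 / (2 * \<gamma>) * (norm (y - xb))\<^sup>2))"

definition moreau :: "real \<Rightarrow> ('b::real_normed_vector \<Rightarrow> real) \<Rightarrow> 'b \<Rightarrow> real" where
  "moreau \<mu> g zb = (INF z. g z + 1 / (2 * \<mu>) * (norm (z - zb))\<^sup>2)"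

definition resid :: "real \<Rightarrow> ('a::real_inner \<Rightarrow> real) \<Rightarrow> ('a \<Rightarrow> ereal) \<Rightarrow> 'a \<Rightarrow> real" where
  "resid \<gamma> F \<phi> x = norm ((1 / \<gamma>) *\<^sub>R (x - prox \<gamma> \<phi> (x - \<gamma> *\<^sub>R grad F x)))"

end

theory Submission
  imports Defs
begin

lemma convex_funD':
  fixes \<phi> :: "'a::real_vector \<Rightarrow> ereal"
  assumes "convex_fun \<phi>" "\<phi> x \<le> ereal a" "\<phi> y \<le> ereal b" "0 \<le> t" "t \<le> 1"
  shows "\<phi> ((1-t) *\<^sub>R x + t *\<^sub>R y) \<le> ereal ((1-t)*a + t*b)"
proof -
  have "(x,a) \<in> epi \<phi>" "(y,b) \<in> epi \<phi>" using assms by (auto simp: epi_def)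
  then have "(1-t) *\<^sub>R (x,a) + t *\<^sub>R (y,b) \<in> epi \<phi>"
    using assms(1,4,5) unfolding convex_fun_def by (intro convexD) auto
  then show ?thesis by (simp add: epi_def)
qed

lemma lsc_lim:
  fixes \<phi> :: "'a::topological_space \<Rightarrow> ereal"
  assumes "lsc_fun \<phi>" "(y \<longlongrightarrow> l) sequentially"
    "eventually (\<lambda>k. \<phi> (y k) \<le> ereal t) sequentially"
  shows "\<phi> l \<le> ereal t"
proof -
  have "((\<lambda>k. (y k, t)) \<longlongrightarrow> (l, t)) sequentially"
    using assms(2) by (intro tendsto_intros)
  moreover have "eventually (\<lambda>k. (y k, t) \<in> epi \<phi>) sequentially"
    using assms(3) by (simp add: epi_def)
  ultimately have "(l,t) \<in> epi \<phi>"
    using assms(1) unfolding lsc_fun_def by (intro Lim_in_closed_set) auto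
  then show ?thesis by (simp add: epi_def)
qed

lemma ball_bound:
  fixes \<phi> :: "'a::euclidean_space \<Rightarrow> ereal"
  assumes "proper_fun \<phi>" "lsc_fun \<phi>"
  shows "\<exists>m. \<forall>y\<in>cball x0 1. ereal m \<le> \<phi> y"
proof (rule ccontr)
  assume "\<not> ?thesis"
  then have "\<forall>k::nat. \<exists>y. y \<in> cball x0 1 \<and> \<phi> y < ereal (- real k)"
    by (meson not_le)
  then obtain ys where ys: "\<And>k. ys k \<in> cball x0 1" "\<And>k. \<phi> (ys k) < ereal (- real k)"
    by metis
  obtain l r where lr: "l \<in> cball x0 1" "strict_mono (r :: nat \<Rightarrow> nat)" "(ys \<circ> r) \<longlonglongrightarrow> l"
    using seq_compactE[OF compact_imp_seq_compact[OF compact_cball[of x0 1]]] ys(1) by metis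
  have "\<phi> l \<le> ereal B" for B
  proof (rule lsc_lim[OF assms(2) lr(3)])
    show "\<forall>\<^sub>F k in sequentially. \<phi> ((ys \<circ> r) k) \<le> ereal B"
      unfolding eventually_sequentially
    proof (intro exI allI impI)
      fix k assume k: "nat \<lceil>- B\<rceil> \<le> k"
      have "k \<le> r k" using lr(2) by (simp add: strict_mono_imp_increasing)
      then have "- real (r k) \<le> B" using k by linarith
      then have "ereal (- real (r k)) \<le> ereal B" by simp
      then show "\<phi> ((ys \<circ> r) k) \<le> ereal B" using ys(2)[of "r k"]
        by (simp del: ereal_less_eq)
    qed
  qed
  then have "\<phi> l = -\<infinity>" by (rule ereal_bot)
  then show False using assms(1) by (simp add: proper_fun_def)
qed

lemma lin_bound:
  fixes \<phi> :: "'a::euclidean_space \<Rightarrow> ereal"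
  assumes "proper_fun \<phi>" "lsc_fun \<phi>" "convex_fun \<phi>" "\<phi> x0 = ereal f0"
  shows "\<exists>m C. C \<ge> 0 \<and> (\<forall>y. ereal (m - C * norm (y - x0)) \<le> \<phi> y)"
proof -
  obtain m0 where m0: "\<And>y. y \<in> cball x0 1 \<Longrightarrow> ereal m0 \<le> \<phi> y"
    using ball_bound[OF assms(1,2), of x0] by blast
  have "m0 \<le> f0" using m0[of x0] assms(4) by simp
  define C where "C = f0 - m0"
  have C: "C \<ge> 0" using \<open>m0 \<le> f0\<close> C_def by simp
  have "ereal (m0 - C * norm (y - x0)) \<le> \<phi> y" for y
  proof (cases "norm (y - x0) \<le> 1")
    case True
    then have "ereal m0 \<le> \<phi> y" using m0 by (simp add: dist_norm norm_minus_commute)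
    moreover have "m0 - C * norm (y - x0) \<le> m0" using C by simp
    ultimately show ?thesis by (meson ereal_less_eq(3) order_trans)
  next
    case False
    define D where "D = norm (y - x0)"
    have D1: "D > 1" using False D_def by simp
    show ?thesis
    proof (cases "\<phi> y")
      case (real b)
      define s where "s = 1 / D"
      have s: "0 \<le> s" "s \<le> 1" using D1 s_def by auto
      define z where "z = (1 - s) *\<^sub>R x0 + s *\<^sub>R y"
      have "z - x0 = s *\<^sub>R (y - x0)" by (simp add: z_def algebra_simps)
      moreover have "y \<noteq> x0" using D1 D_def by auto
      ultimately have "norm (z - x0) = 1" using D1 s_def D_def by simp
      then have "ereal m0 \<le> \<phi> z" using m0 by (simp add: dist_norm norm_minus_commute)
      also have "\<phi> z \<le> ereal ((1-s)*f0 + s*b)"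
        unfolding z_def by (rule convex_funD'[OF assms(3)]) (use assms(4) real s in auto)
      finally have "m0 \<le> (1-s)*f0 + s*b" by simp
      then have "D * m0 \<le> D * ((1-s)*f0 + s*b)" using D1 by (simp add: mult_left_mono)
      also have "D * ((1-s)*f0 + s*b) = (D - 1) * f0 + b"
        unfolding s_def using D1 by (simp add: field_simps)
      finally have b1: "D * m0 - (D - 1) * f0 \<le> b" by linarith
      have "D * m0 - (D - 1) * f0 = m0 - (D - 1) * C" by (simp add: C_def algebra_simps)
      moreover have "(D - 1) * C \<le> D * C" using C by (simp add: algebra_simps)
      ultimately have "m0 - C * D \<le> b" using b1 by (simp add: mult.commute)
      then show ?thesis using real D_def by simp
    next
      case PInf then show ?thesis by simp
    next
      case MInf then show ?thesis using assms(1) by (simp add: proper_fun_def)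
    qed
  qed
  then show ?thesis using C by blast
qed


lemma amgm: fixes \<gamma> C Q :: real assumes "\<gamma> > 0"
  shows "C * Q \<le> 1/(2*\<gamma>) * Q\<^sup>2 + \<gamma> * C\<^sup>2 / 2"
proof -
  have "0 \<le> (Q - \<gamma> * C)\<^sup>2 / (2*\<gamma>)" using assms by simp
  also have "(Q - \<gamma> * C)\<^sup>2 / (2*\<gamma>) = 1/(2*\<gamma>) * Q\<^sup>2 + \<gamma> * C\<^sup>2 / 2 - C * Q"
    using assms by (simp add: field_simps power2_eq_square)
  finally show ?thesis by simp
qed

lemma coerc:
  fixes \<gamma> C Q D e m K :: real
  assumes "\<gamma> > 0" "C \<ge> 0" "D \<le> Q + e" "Q \<ge> 0" "m - C*D + 1/(2*\<gamma>) * Q\<^sup>2 \<le> K"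
  shows "Q \<le> \<bar>4*\<gamma>*(K - m + C*e + \<gamma>*C\<^sup>2)\<bar> + 1"
proof -
  have "C*D \<le> C*Q + C*e" using assms(2,3) by (metis distrib_left mult_left_mono)
  moreover have "C * Q \<le> 1/(2*(2*\<gamma>)) * Q\<^sup>2 + (2*\<gamma>) * C\<^sup>2 / 2" using amgm[of "2*\<gamma>"] assms(1) by simp
  ultimately have "1/(2*\<gamma>) * Q\<^sup>2 - 1/(4*\<gamma>) * Q\<^sup>2 \<le> K - m + C*e + \<gamma>*C\<^sup>2"
    using assms(5) by simp
  moreover have "1/(2*\<gamma>) * Q\<^sup>2 - 1/(4*\<gamma>) * Q\<^sup>2 = Q\<^sup>2 / (4*\<gamma>)" using assms(1) by (simp add: field_simps)
  ultimately have "Q\<^sup>2 / (4*\<gamma>) \<le> K - m + C*e + \<gamma>*C\<^sup>2" by simp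
  then have W: "Q\<^sup>2 \<le> 4*\<gamma>*(K - m + C*e + \<gamma>*C\<^sup>2)" using assms(1) by (simp add: field_simps)
  show ?thesis
  proof (rule ccontr)
    assume "\<not> ?thesis"
    then have "Q > \<bar>4*\<gamma>*(K - m + C*e + \<gamma>*C\<^sup>2)\<bar> + 1" by simp
    moreover have "Q \<le> Q\<^sup>2" if "Q \<ge> 1" using that by (simp add: power2_eq_square)
    ultimately show False using W by linarith
  qed
qed

lemma ereal_add_less_D: "(x::ereal) + ereal a < ereal b \<Longrightarrow> x \<le> ereal (b - a)"
  by (cases x) auto

lemma prox_ex1:
  fixes \<phi> :: "'a::euclidean_space \<Rightarrow> ereal"
  assumes ph: "proper_fun \<phi>" "lsc_fun \<phi>" "convex_fun \<phi>" and g: "\<gamma> > 0"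
  shows "\<exists>!p. \<forall>y. \<phi> p + ereal (1 / (2 * \<gamma>) * (norm (p - u))\<^sup>2)
                    \<le> \<phi> y + ereal (1 / (2 * \<gamma>) * (norm (y - u))\<^sup>2)"
proof -
  define q where "q y = 1 / (2 * \<gamma>) * (norm (y - u))\<^sup>2" for y
  define f where "f y = \<phi> y + ereal (q y)" for y
  obtain x0 where x0: "\<phi> x0 < \<infinity>" using ph(1) by (auto simp: proper_fun_def)
  then obtain f0 where f0: "\<phi> x0 = ereal f0" using ph(1) unfolding proper_fun_def
    by (cases "\<phi> x0") auto
  obtain m C where mC: "C \<ge> 0" "\<And>y. ereal (m - C * norm (y - x0)) \<le> \<phi> y"
    using lin_bound[OF ph f0] by blast
  define e where "e = norm (x0 - u)"
  have tri: "norm (y - x0) \<le> norm (y - u) + e" for y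
    unfolding e_def using norm_triangle_ineq[of "y - u" "u - x0"]
    by (simp add: norm_minus_commute)
  have fge: "ereal (m - C * norm (y - x0) + q y) \<le> f y" for y
  proof -
    have "ereal (m - C * norm (y - x0)) + ereal (q y) \<le> f y"
      unfolding f_def using mC(2)[of y] by (rule add_right_mono)
    then show ?thesis by simp
  qed
  define L where "L = m - C*e - \<gamma>*C\<^sup>2/2"
  have LB: "ereal L \<le> f y" for y
  proof -
    have "C * norm (y - x0) \<le> C * norm (y - u) + C * e"
      using tri[of y] mC(1) by (metis distrib_left mult_left_mono)
    moreover have "C * norm (y - u) \<le> q y + \<gamma> * C\<^sup>2 / 2" unfolding q_def using amgm[OF g] by simp
    ultimately have "L \<le> m - C * norm (y - x0) + q y" unfolding L_def by simp
    then show ?thesis using fge[of y] by (meson ereal_less_eq(3) order_trans)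
  qed
  define v where "v = Inf (range f)"
  have "v \<le> f x0" unfolding v_def by (simp add: Inf_lower)
  also have "f x0 = ereal (f0 + q x0)" by (simp add: f_def f0)
  finally have v1: "v \<le> ereal (f0 + q x0)" .
  have v2: "ereal L \<le> v" unfolding v_def by (rule INF_greatest) (rule LB)
  obtain vr where vr: "v = ereal vr" using v1 v2 by (cases v) auto
  have "\<forall>k::nat. \<exists>y. f y < ereal (vr + inverse (real (Suc k)))"
  proof
    fix k :: nat
    have "v < ereal (vr + inverse (real (Suc k)))" using vr by simp
    then show "\<exists>y. f y < ereal (vr + inverse (real (Suc k)))"
      unfolding v_def Inf_less_iff by auto
  qed
  then obtain ys where ys: "\<And>k. f (ys k) < ereal (vr + inverse (real (Suc k)))" by metis
  define Rad where "Rad = \<bar>4*\<gamma>*((vr + 1) - m + C*e + \<gamma>*C\<^sup>2)\<bar> + 1"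
  have ysb: "ys k \<in> cball u Rad" for k
  proof -
    have "inverse (real (Suc k)) \<le> 1" by (simp add: inverse_le_1_iff)
    then have "f (ys k) < ereal (vr + 1)" using ys[of k]
      by (meson ereal_less_eq(3) add_left_mono less_le_trans)
    then have "m - C * norm (ys k - x0) + q (ys k) \<le> vr + 1" using fge[of "ys k"]
      by (meson ereal_less_eq(3) less_imp_le order_trans)
    then have "norm (ys k - u) \<le> Rad" unfolding Rad_def q_def
      by (intro coerc[OF g mC(1) tri]) auto
    then show ?thesis by (simp add: dist_norm norm_minus_commute)
  qed
  obtain l r where lr: "strict_mono (r :: nat \<Rightarrow> nat)" "(ys \<circ> r) \<longlonglongrightarrow> l"
    using seq_compactE[OF compact_imp_seq_compact[OF compact_cball[of u Rad]]] ysb by metis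
  have phl: "\<phi> l \<le> ereal (vr - q l)"
  proof (rule ereal_le_epsilon2)
    fix \<epsilon> :: real assume ep: "0 < \<epsilon>"
    have t1: "(\<lambda>k. inverse (real (Suc (r k)))) \<longlonglongrightarrow> 0"
      using LIMSEQ_subseq_LIMSEQ[OF LIMSEQ_inverse_real_of_nat lr(1)] by (simp add: o_def)
    have t2: "(\<lambda>k. q ((ys \<circ> r) k)) \<longlonglongrightarrow> q l"
      unfolding q_def by (intro tendsto_intros lr(2))
    have ev: "eventually (\<lambda>k. inverse (real (Suc (r k))) < \<epsilon>/2 \<and> q ((ys \<circ> r) k) > q l - \<epsilon>/2) sequentially"
      using order_tendstoD(2)[OF t1, of "\<epsilon>/2"] order_tendstoD(1)[OF t2, of "q l - \<epsilon>/2"] ep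
      by (auto intro: eventually_conj)
    have "\<phi> l \<le> ereal (vr - q l + \<epsilon>)"
    proof (rule lsc_lim[OF ph(2) lr(2)])
      show "\<forall>\<^sub>F k in sequentially. \<phi> ((ys \<circ> r) k) \<le> ereal (vr - q l + \<epsilon>)"
      proof (rule eventually_mono[OF ev], clarify)
        fix k assume k: "inverse (real (Suc (r k))) < \<epsilon>/2" "q ((ys \<circ> r) k) > q l - \<epsilon>/2"
        have "\<phi> (ys (r k)) \<le> ereal (vr + inverse (real (Suc (r k))) - q (ys (r k)))"
          using ys[of "r k"] unfolding f_def by (rule ereal_add_less_D)
        also have "\<dots> \<le> ereal (vr - q l + \<epsilon>)" using k by simp
        finally show "\<phi> ((ys \<circ> r) k) \<le> ereal (vr - q l + \<epsilon>)" by simp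
      qed
    qed
    then show "\<phi> l \<le> ereal (vr - q l) + ereal \<epsilon>" by simp
  qed
  have fl: "f l \<le> f y" for y
  proof -
    have "f l \<le> ereal (vr - q l) + ereal (q l)" unfolding f_def using phl by (rule add_right_mono)
    also have "\<dots> = v" using vr by simp
    also have "v \<le> f y" unfolding v_def by (simp add: Inf_lower)
    finally show ?thesis .
  qed
  have uniq: "p1 = p2" if p1: "\<forall>y. f p1 \<le> f y" and p2: "\<forall>y. f p2 \<le> f y" for p1 p2
  proof -
    have "f p1 \<le> f x0" "f p2 \<le> f x0" using p1 p2 by auto
    then have "\<phi> p1 < \<infinity>" "\<phi> p2 < \<infinity>" using f0 by (auto simp: f_def)
    moreover have "\<phi> p1 \<noteq> -\<infinity>" "\<phi> p2 \<noteq> -\<infinity>" using ph(1) by (auto simp: proper_fun_def)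
    ultimately obtain a1 a2 where a: "\<phi> p1 = ereal a1" "\<phi> p2 = ereal a2"
      by (cases "\<phi> p1"; cases "\<phi> p2") auto
    have eq: "a1 + q p1 = a2 + q p2" using p1 p2 a unfolding f_def
      by (metis antisym plus_ereal.simps(1) ereal_less_eq(3))
    define z where "z = (1 - 1/2) *\<^sub>R p1 + (1/2::real) *\<^sub>R p2"
    have "\<phi> z \<le> ereal ((1 - 1/2) * a1 + (1/2) * a2)"
      unfolding z_def by (rule convex_funD'[OF ph(3)]) (use a in auto)
    then have "f z \<le> ereal ((1 - 1/2) * a1 + (1/2) * a2 + q z)"
      unfolding f_def by (metis add_right_mono plus_ereal.simps(1))
    moreover have "f p1 \<le> f z" using p1 by simp
    ultimately have "f p1 \<le> ereal ((1 - 1/2) * a1 + (1/2) * a2 + q z)" by (rule order_trans[rotated])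
    then have le: "a1 + q p1 \<le> (1 - 1/2) * a1 + (1/2) * a2 + q z" using a by (simp add: f_def)
    have nz: "(norm (z - u))\<^sup>2 = ((norm (p1 - u))\<^sup>2 + (norm (p2 - u))\<^sup>2)/2 - (norm (p1 - p2))\<^sup>2 / 4"
    proof -
      have zz: "z - u = (1/2) *\<^sub>R ((p1 - u) + (p2 - u))" by (simp add: z_def algebra_simps flip: scaleR_add_left)
      show ?thesis unfolding zz power2_norm_eq_inner
        by (simp add: inner_add_left inner_add_right inner_diff_left inner_diff_right inner_commute algebra_simps) (simp add: field_simps)
    qed
    define X where "X = 1/(2*\<gamma>) * (norm (p1 - p2))\<^sup>2 / 4"
    have qz: "q z = (q p1 + q p2)/2 - X"
      unfolding q_def nz X_def using g by (simp add: field_simps)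
    have "X \<le> 0"
      using le eq unfolding qz by (simp add: field_simps)
    then have "1/(2*\<gamma>) * (norm (p1 - p2))\<^sup>2 / 4 \<le> 0" unfolding X_def .
    then have "(norm (p1 - p2))\<^sup>2 \<le> 0" using g by (simp add: field_simps)
    then show ?thesis by simp
  qed
  show ?thesis
  proof (rule ex1I[of _ l])
    show "\<forall>y. \<phi> l + ereal (1 / (2 * \<gamma>) * (norm (l - u))\<^sup>2) \<le> \<phi> y + ereal (1 / (2 * \<gamma>) * (norm (y - u))\<^sup>2)"
      using fl unfolding f_def q_def by blast
  next
    fix p assume "\<forall>y. \<phi> p + ereal (1 / (2 * \<gamma>) * (norm (p - u))\<^sup>2) \<le> \<phi> y + ereal (1 / (2 * \<gamma>) * (norm (y - u))\<^sup>2)"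
    then have "\<forall>y. f p \<le> f y" unfolding f_def q_def by blast
    then show "p = l" using uniq fl by blast
  qed
qed


lemma prox_min:
  fixes \<phi> :: "'a::euclidean_space \<Rightarrow> ereal"
  assumes "proper_fun \<phi>" "lsc_fun \<phi>" "convex_fun \<phi>" "\<gamma> > 0"
  shows "\<phi> (prox \<gamma> \<phi> u) + ereal (1 / (2 * \<gamma>) * (norm (prox \<gamma> \<phi> u - u))\<^sup>2)
                    \<le> \<phi> y + ereal (1 / (2 * \<gamma>) * (norm (y - u))\<^sup>2)"
  using theI'[OF prox_ex1[OF assms, of u]] unfolding prox_def by blast

lemma prox_fin:
  fixes \<phi> :: "'a::euclidean_space \<Rightarrow> ereal"
  assumes "proper_fun \<phi>" "lsc_fun \<phi>" "convex_fun \<phi>" "\<gamma> > 0"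
  shows "\<exists>a. \<phi> (prox \<gamma> \<phi> u) = ereal a"
proof -
  obtain x0 where x0: "\<phi> x0 < \<infinity>" using assms(1) by (auto simp: proper_fun_def)
  have "\<phi> (prox \<gamma> \<phi> u) + ereal (1 / (2 * \<gamma>) * (norm (prox \<gamma> \<phi> u - u))\<^sup>2) < \<infinity>"
    using prox_min[OF assms, of u x0] x0 by (metis ereal_less_PInfty order_le_less_trans plus_ereal.simps(1) less_ereal.simps(4) ereal_plus_eq_PInfty less_PInf_Ex_of_nat)
  then have "\<phi> (prox \<gamma> \<phi> u) \<noteq> \<infinity>" by auto
  moreover have "\<phi> (prox \<gamma> \<phi> u) \<noteq> -\<infinity>" using assms(1) by (auto simp: proper_fun_def)
  ultimately show ?thesis by (cases "\<phi> (prox \<gamma> \<phi> u)") auto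
qed

lemma prox_var:
  fixes \<phi> :: "'a::euclidean_space \<Rightarrow> ereal"
  assumes ph: "proper_fun \<phi>" "lsc_fun \<phi>" "convex_fun \<phi>" and g: "\<gamma> > 0"
    and p: "p = prox \<gamma> \<phi> u" and a: "\<phi> p = ereal a" and b: "\<phi> y = ereal b"
  shows "a + inner (u - p) (y - p) / \<gamma> \<le> b"
proof -
  define N where "N = (norm (y - p))\<^sup>2"
  define I where "I = inner (u - p) (y - p)"
  define q where "q z = 1 / (2 * \<gamma>) * (norm (z - u))\<^sup>2" for z
  have key: "a - b + I/\<gamma> \<le> t * N / (2*\<gamma>)" if t: "0 < t" "t \<le> 1" for t
  proof -
    define z where "z = (1-t) *\<^sub>R p + t *\<^sub>R y"
    have "\<phi> z \<le> ereal ((1-t)*a + t*b)" unfolding z_def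
      by (rule convex_funD'[OF ph(3)]) (use a b t in auto)
    then have "\<phi> z + ereal (q z) \<le> ereal ((1-t)*a + t*b + q z)"
      by (metis add_right_mono plus_ereal.simps(1))
    moreover have "\<phi> p + ereal (q p) \<le> \<phi> z + ereal (q z)"
      using prox_min[OF ph g, of u z] unfolding p[symmetric] q_def .
    ultimately have m: "a + q p \<le> (1-t)*a + t*b + q z" using a by (metis order_trans plus_ereal.simps(1) ereal_less_eq(3))
    have zz: "z - u = (p - u) + t *\<^sub>R (y - p)" by (simp add: z_def algebra_simps)
    have "(norm (z - u))\<^sup>2 = (norm (p - u))\<^sup>2 - 2 * t * I + t\<^sup>2 * N"
      unfolding zz N_def I_def power2_norm_eq_inner
      by (simp add: inner_add_left inner_add_right inner_diff_left inner_diff_right inner_commute algebra_simps power2_eq_square)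
    then have "q z = q p + (- 2 * t * I + t\<^sup>2 * N) / (2*\<gamma>)"
      unfolding q_def using g by (simp add: field_simps)
    with m have "t * (a - b) \<le> (- 2 * t * I + t\<^sup>2 * N) / (2*\<gamma>)" by (simp add: algebra_simps)
    also have "\<dots> = t * (- I/\<gamma> + t * N / (2*\<gamma>))" using g by (simp add: field_simps power2_eq_square)
    finally have "t * (a - b + I/\<gamma>) \<le> t * (t * N / (2*\<gamma>))" by (simp add: algebra_simps)
    then show ?thesis using t(1) by (rule mult_left_le_imp_le)
  qed
  show ?thesis
  proof (rule ccontr)
    assume "\<not> ?thesis"
    then have d: "a - b + I/\<gamma> > 0" unfolding I_def by simp
    define \<delta> where "\<delta> = a - b + I/\<gamma>"
    have N0: "N \<ge> 0" unfolding N_def by simp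
    define t where "t = min 1 (\<gamma> * \<delta> / (N + 1))"
    have t: "0 < t" "t \<le> 1" using d g N0 unfolding t_def \<delta>_def by auto
    have "\<delta> \<le> t * N / (2*\<gamma>)" using key[OF t] unfolding \<delta>_def .
    also have "t * N / (2*\<gamma>) \<le> (\<gamma> * \<delta> / (N + 1)) * N / (2*\<gamma>)"
      using N0 g by (intro divide_right_mono mult_right_mono) (auto simp: t_def)
    also have "\<dots> = \<delta> * (N / (N+1)) / 2"
    proof -
      have "N + 1 \<noteq> 0" using N0 by simp
      then show ?thesis using g by (simp add: divide_simps)
    qed
    also have "\<dots> < \<delta>"
    proof -
      have "N / (N+1) < 1" using N0 by simp
      moreover have dpos: "\<delta> > 0" using d \<delta>_def by simp
      ultimately have "\<delta> * (N / (N+1)) < \<delta>" using mult_strict_left_mono[of "N/(N+1)" 1 \<delta>] by simp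
      moreover have "\<And>w::real. w < \<delta> \<Longrightarrow> w / 2 < \<delta>" using dpos by linarith
      ultimately show ?thesis by blast
    qed
    finally show False by simp
  qed
qed

lemma final_real:
  fixes g1 g2 s r c :: real
  assumes "0 < g1" "g1 \<le> g2" "0 \<le> s" "0 \<le> r" "g1 * s\<^sup>2 + g2 * r\<^sup>2 \<le> (g1 + g2) * c" "c \<le> s * r"
  shows "r \<le> s"
proof (rule ccontr)
  assume "\<not> r \<le> s"
  then have sr: "s < r" by simp
  have "g1 * s < g1 * r" using sr assms(1) by simp
  also have "g1 * r \<le> g2 * r" using assms(2,4) by (simp add: mult_right_mono)
  finally have "0 < (r - s) * (g2 * r - g1 * s)" using sr by (simp add: mult_pos_pos)
  also have "(r - s) * (g2 * r - g1 * s) = g1 * s\<^sup>2 + g2 * r\<^sup>2 - (g1 + g2) * (s * r)"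
    by (simp add: algebra_simps power2_eq_square)
  finally have "(g1 + g2) * (s * r) < g1 * s\<^sup>2 + g2 * r\<^sup>2" by simp
  moreover have "(g1 + g2) * c \<le> (g1 + g2) * (s * r)" using assms by (simp add: mult_left_mono)
  ultimately show False using assms(5) by simp
qed

lemma resid_mono:
  fixes \<phi> :: "'a::euclidean_space \<Rightarrow> ereal"
  assumes ph: "proper_fun \<phi>" "lsc_fun \<phi>" "convex_fun \<phi>" and g: "0 < g1" "g1 \<le> g2"
  shows "resid g2 F \<phi> x \<le> resid g1 F \<phi> x"
proof -
  have g2: "0 < g2" using g by simp
  define d where "d = grad F x"
  define p1 where "p1 = prox g1 \<phi> (x - g1 *\<^sub>R d)"
  define p2 where "p2 = prox g2 \<phi> (x - g2 *\<^sub>R d)"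
  obtain a1 where a1: "\<phi> p1 = ereal a1" using prox_fin[OF ph g(1)] p1_def by blast
  obtain a2 where a2: "\<phi> p2 = ereal a2" using prox_fin[OF ph g2] p2_def by blast
  define U where "U = (1/g1) *\<^sub>R (x - p1)"
  define V where "V = (1/g2) *\<^sub>R (x - p2)"
  have xp1: "x - p1 = g1 *\<^sub>R U" using g by (simp add: U_def)
  have xp2: "x - p2 = g2 *\<^sub>R V" using g2 by (simp add: V_def)
  have v1: "a1 + inner ((x - g1 *\<^sub>R d) - p1) (p2 - p1) / g1 \<le> a2"
    by (rule prox_var[OF ph g(1) p1_def a1 a2])
  have v2: "a2 + inner ((x - g2 *\<^sub>R d) - p2) (p1 - p2) / g2 \<le> a1"
    by (rule prox_var[OF ph g2 p2_def a2 a1])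
  have e1: "(x - g1 *\<^sub>R d) - p1 = g1 *\<^sub>R (U - d)" using xp1 by (simp add: algebra_simps)
  have e2: "(x - g2 *\<^sub>R d) - p2 = g2 *\<^sub>R (V - d)" using xp2 by (simp add: algebra_simps)
  have "inner ((x - g1 *\<^sub>R d) - p1) (p2 - p1) / g1 = inner (U - d) (p2 - p1)"
    unfolding e1 using g by simp
  moreover have "inner ((x - g2 *\<^sub>R d) - p2) (p1 - p2) / g2 = inner (V - d) (p1 - p2)"
    unfolding e2 using g2 by simp
  ultimately have "inner (U - d) (p2 - p1) + inner (V - d) (p1 - p2) \<le> 0" using v1 v2 by linarith
  moreover have "inner (U - d) (p2 - p1) + inner (V - d) (p1 - p2) = inner (U - V) (p2 - p1)"
    by (simp add: inner_diff_left inner_diff_right algebra_simps)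
  moreover have "p2 - p1 = g1 *\<^sub>R U - g2 *\<^sub>R V" using xp1 xp2 by (simp add: algebra_simps)
  ultimately have "inner (U - V) (g1 *\<^sub>R U - g2 *\<^sub>R V) \<le> 0" by simp
  then have "g1 * (norm U)\<^sup>2 + g2 * (norm V)\<^sup>2 \<le> (g1 + g2) * inner U V"
    unfolding power2_norm_eq_inner
    by (simp add: inner_diff_left inner_diff_right inner_commute algebra_simps)
  then have "norm V \<le> norm U"
    by (rule final_real[OF g norm_ge_zero norm_ge_zero _ norm_cauchy_schwarz])
  then show ?thesis unfolding resid_def U_def V_def p1_def p2_def d_def .
qed


lemma moreau_pt:
  fixes g :: "'b::real_normed_vector \<Rightarrow> real"
  assumes mu: "0 < \<mu>" and L: "Lg-lipschitz_on UNIV g"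
  shows "g zb - \<mu> * Lg\<^sup>2 / 2 \<le> g z + 1 / (2 * \<mu>) * (norm (z - zb))\<^sup>2"
proof -
  have "dist (g z) (g zb) \<le> Lg * dist z zb" using lipschitz_onD[OF L] by simp
  then have "g zb - Lg * norm (z - zb) \<le> g z" by (simp add: dist_real_def dist_norm abs_le_iff)
  moreover have "Lg * norm (z - zb) \<le> 1 / (2 * \<mu>) * (norm (z - zb))\<^sup>2 + \<mu> * Lg\<^sup>2 / 2"
    by (rule amgm[OF mu])
  ultimately show ?thesis by linarith
qed

lemma moreau_bdd:
  fixes g :: "'b::real_normed_vector \<Rightarrow> real"
  assumes mu: "0 < \<mu>" and L: "Lg-lipschitz_on UNIV g"
  shows "bdd_below (range (\<lambda>z. g z + 1 / (2 * \<mu>) * (norm (z - zb))\<^sup>2))"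
  using moreau_pt[OF assms] by (intro bdd_belowI2) auto

lemma moreau_lb:
  fixes g :: "'b::real_normed_vector \<Rightarrow> real"
  assumes mu: "0 < \<mu>" and L: "Lg-lipschitz_on UNIV g"
  shows "g zb - \<mu> * Lg\<^sup>2 / 2 \<le> moreau \<mu> g zb"
  unfolding moreau_def using moreau_pt[OF assms] by (intro cINF_greatest) auto

lemma moreau_cmp:
  fixes g :: "'b::real_normed_vector \<Rightarrow> real"
  assumes mu: "0 < \<mu>'" "\<mu>' \<le> \<mu>" and L: "Lg-lipschitz_on UNIV g"
  shows "moreau \<mu>' g zb \<le> moreau \<mu> g zb + (\<mu> - \<mu>') * Lg\<^sup>2 / 2"
proof -
  have mu0: "0 < \<mu>" using mu by simp
  define k where "k = \<mu>' / \<mu>"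
  have k: "0 < k" "k \<le> 1" using mu by (auto simp: k_def)
  have "moreau \<mu>' g zb - (\<mu> - \<mu>') * Lg\<^sup>2 / 2 \<le> g w + 1 / (2 * \<mu>) * (norm (w - zb))\<^sup>2" for w
  proof -
    define t where "t = norm (w - zb)"
    define w' where "w' = zb + k *\<^sub>R (w - zb)"
    define Z where "Z = 1 / (2 * \<mu>) * t\<^sup>2"
    have "moreau \<mu>' g zb \<le> g w' + 1 / (2 * \<mu>') * (norm (w' - zb))\<^sup>2"
      unfolding moreau_def by (rule cINF_lower[OF moreau_bdd[OF mu(1) L]]) simp
    also have "norm (w' - zb) = k * t" using k by (simp add: w'_def t_def)
    also have "g w' \<le> g w + Lg * ((1 - k) * t)"
    proof -
      have "dist (g w') (g w) \<le> Lg * dist w' w" using lipschitz_onD[OF L] by simp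
      moreover have "w' - w = (k - 1) *\<^sub>R (w - zb)" by (simp add: w'_def algebra_simps)
      then have "dist w' w = (1 - k) * t" using k by (simp add: dist_norm t_def abs_if)
      ultimately show ?thesis by (simp add: dist_real_def abs_le_iff)
    qed
    also have "1 / (2 * \<mu>') * (k * t)\<^sup>2 = k * Z"
      using mu mu0 by (simp add: Z_def k_def field_simps power2_eq_square)
    also have "Lg * ((1 - k) * t) \<le> (1 - k) * (Z + \<mu> * Lg\<^sup>2 / 2)"
    proof -
      have "Lg * t \<le> 1 / (2 * \<mu>) * t\<^sup>2 + \<mu> * Lg\<^sup>2 / 2" by (rule amgm[OF mu0])
      then have "(1 - k) * (Lg * t) \<le> (1 - k) * (Z + \<mu> * Lg\<^sup>2 / 2)"
        unfolding Z_def using k by (intro mult_left_mono) auto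
      then show ?thesis by (simp add: algebra_simps)
    qed
    finally have "moreau \<mu>' g zb \<le> g w + Z + (1 - k) * \<mu> * Lg\<^sup>2 / 2"
      by (simp add: algebra_simps)
    moreover have "(1 - k) * \<mu> = \<mu> - \<mu>'" using mu0 by (simp add: k_def field_simps)
    ultimately show ?thesis unfolding Z_def t_def by (simp add: algebra_simps)
  qed
  then have "moreau \<mu>' g zb - (\<mu> - \<mu>') * Lg\<^sup>2 / 2 \<le> moreau \<mu> g zb"
    unfolding moreau_def[of \<mu>] by (intro cINF_greatest) auto
  then show ?thesis by simp
qed

theorem theorem2:
  fixes \<phi> :: "'a::euclidean_space \<Rightarrow> ereal"
    and h :: "'a \<Rightarrow> real"
    and S :: "'a \<Rightarrow> 'b::euclidean_space"
    and g :: "'b \<Rightarrow> real"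
    and Lg \<eta> Lh c M \<beta> \<gamma>bar w1 w2 :: real
    and \<mu> \<gamma> :: "nat \<Rightarrow> real"
    and x :: "nat \<Rightarrow> 'a"
  defines "F \<equiv> (\<lambda>n y. h y + moreau (\<mu> n) g (S y))"
  assumes phi: "proper_fun \<phi>" "lsc_fun \<phi>" "convex_fun \<phi>"
    and h_diff: "\<forall>y. h differentiable (at y)"
    and h_lip: "Lh-lipschitz_on (edom \<phi>) (grad h)"
    and S_C1: "\<exists>DS :: 'a \<Rightarrow> ('a \<Rightarrow>\<^sub>L 'b).
                  (\<forall>y. (S has_derivative blinfun_apply (DS y)) (at y)) \<and> continuous_on UNIV DS"
    and g_lip: "Lg > 0" "Lg-lipschitz_on UNIV g"
    and g_wc: "\<eta> > 0" "convex_on UNIV (\<lambda>z. g z + \<eta> / 2 * (norm z)\<^sup>2)"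
    and argmin_ne: "\<exists>xs. \<forall>y. ereal (h xs + g (S xs)) + \<phi> xs \<le> ereal (h y + g (S y)) + \<phi> y"
    and x1: "x 1 \<in> edom \<phi>"
    and c: "0 < c" "c < 1"
    and mu_pos: "\<forall>n\<ge>1. 0 < \<mu> n \<and> \<mu> n \<le> 1 / (2 * \<eta>)"
    and mu_lim: "\<mu> \<longlonglongrightarrow> 0"
    and mu_sum: "filterlim (\<lambda>N. \<Sum>n=1..N. \<mu> n) at_top at_top"
    and M: "M \<ge> 1" "\<forall>n\<ge>1. 1 / M \<le> \<mu> (n + 1) / \<mu> n \<and> \<mu> (n + 1) / \<mu> n \<le> 1"
    and F_diff: "\<forall>n\<ge>1. \<forall>y. F n differentiable (at y)"
    and F_lip: "w1 \<ge> 0" "w2 > 0"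
               "\<forall>n\<ge>1. (w1 + w2 / \<mu> n)-lipschitz_on (edom \<phi>) (grad (F n))"
    and \<beta>: "\<beta> > 0" and \<gamma>bar: "\<gamma>bar > 0"
    and gamma_bounds: "\<forall>n\<ge>1. \<beta> / (w1 + w2 / \<mu> n) \<le> \<gamma> n \<and> \<gamma> n \<le> \<gamma>bar"
    and descent: "\<forall>n\<ge>1.
         ereal (F n (prox (\<gamma> n) \<phi> (x n - \<gamma> n *\<^sub>R grad (F n) (x n))))
           + \<phi> (prox (\<gamma> n) \<phi> (x n - \<gamma> n *\<^sub>R grad (F n) (x n)))
         \<le> ereal (F n (x n)) + \<phi> (x n) - ereal (c * \<gamma> n * (resid (\<gamma> n) (F n) \<phi> (x n))\<^sup>2)"
    and iter: "\<forall>n\<ge>1. x (n + 1) = prox (\<gamma> n) \<phi> (x n - \<gamma> n *\<^sub>R grad (F n) (x n))"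
  shows "liminf (\<lambda>n. ereal (resid \<gamma>bar (F n) \<phi> (x n))) = 0"
proof -
  have Fn: "\<And>n y. F n y = h y + moreau (\<mu> n) g (S y)" unfolding F_def by simp
  have mupos: "\<And>n. n \<ge> 1 \<Longrightarrow> 0 < \<mu> n" using mu_pos by auto
  have mudec: "\<mu> (Suc n) \<le> \<mu> n" if n: "n \<ge> 1" for n
  proof -
    have "\<mu> (n+1) / \<mu> n \<le> 1" using M(2) n by auto
    then show ?thesis using mupos[OF n] by (simp add: divide_le_eq)
  qed
  define r where "r n = resid (\<gamma> n) (F n) \<phi> (x n)" for n
  define R where "R n = resid \<gamma>bar (F n) \<phi> (x n)" for n
  have desc: "ereal (F n (x (Suc n))) + \<phi> (x (Suc n)) \<le> ereal (F n (x n)) + \<phi> (x n) - ereal (c * \<gamma> n * (r n)\<^sup>2)"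
    if n: "n \<ge> 1" for n
  proof -
    have xeq: "prox (\<gamma> n) \<phi> (x n - \<gamma> n *\<^sub>R grad (F n) (x n)) = x (Suc n)" using iter n by simp
    show ?thesis using descent[rule_format, OF n] unfolding r_def xeq by simp
  qed
  have ninf: "\<And>y. \<phi> y \<noteq> -\<infinity>" using phi(1) by (simp add: proper_fun_def)
  have fin: "\<phi> (x n) < \<infinity>" if "1 \<le> n" for n
    using that
  proof (induction n rule: dec_induct)
    case base then show ?case using x1 by (simp add: edom_def)
  next
    case (step k)
    have "ereal (F k (x (Suc k))) + \<phi> (x (Suc k)) < \<infinity>"
    proof -
      have "ereal (F k (x k)) + \<phi> (x k) - ereal (c * \<gamma> k * (r k)\<^sup>2) < \<infinity>"
        using step.IH by (cases "\<phi> (x k)") auto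
      then show ?thesis using desc[OF step.hyps(1)] by (meson le_less_trans)
    qed
    then show ?case by auto
  qed
  define ph where "ph n = real_of_ereal (\<phi> (x n))" for n
  have phx: "\<phi> (x n) = ereal (ph n)" if "n \<ge> 1" for n
    using fin[OF that] ninf[of "x n"] unfolding ph_def by (cases "\<phi> (x n)") auto
  have descr: "F n (x (Suc n)) + ph (Suc n) \<le> F n (x n) + ph n - c * \<gamma> n * (r n)\<^sup>2"
    if n: "n \<ge> 1" for n
    using desc[OF n] phx[OF n] phx[of "Suc n"] by simp
  obtain xs where xs: "\<forall>y. ereal (h xs + g (S xs)) + \<phi> xs \<le> ereal (h y + g (S y)) + \<phi> y"
    using argmin_ne by blast
  have "\<phi> xs < \<infinity>"
  proof -
    have "ereal (h xs + g (S xs)) + \<phi> xs \<le> ereal (h (x 1) + g (S (x 1))) + ereal (ph 1)"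
      using xs[rule_format, of "x 1"] phx[of 1] by simp
    then show ?thesis by (cases "\<phi> xs") auto
  qed
  then obtain pxs where pxs: "\<phi> xs = ereal pxs" using ninf[of xs] by (cases "\<phi> xs") auto
  define m0 where "m0 = h xs + g (S xs) + pxs"
  have lowb: "m0 \<le> h y + g (S y) + b" if "\<phi> y = ereal b" for y b
    using xs that pxs unfolding m0_def by (metis plus_ereal.simps(1) ereal_less_eq(3))
  define K where "K = Lg\<^sup>2 / 2"
  define \<Psi> where "\<Psi> n = F n (x n) + ph n + \<mu> n * K" for n
  have Psi_lb: "m0 \<le> \<Psi> n" if n: "n \<ge> 1" for n
  proof -
    have "g (S (x n)) - \<mu> n * Lg\<^sup>2 / 2 \<le> moreau (\<mu> n) g (S (x n))"
      by (rule moreau_lb[OF mupos[OF n] g_lip(2)])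
    moreover have "m0 \<le> h (x n) + g (S (x n)) + ph n" by (rule lowb[OF phx[OF n]])
    ultimately show ?thesis unfolding \<Psi>_def Fn K_def by simp
  qed
  have Fcmp: "F (Suc n) y \<le> F n y + \<mu> n * K - \<mu> (Suc n) * K" if n: "n \<ge> 1" for n y
  proof -
    have "moreau (\<mu> (Suc n)) g (S y) \<le> moreau (\<mu> n) g (S y) + (\<mu> n - \<mu> (Suc n)) * Lg\<^sup>2 / 2"
      by (rule moreau_cmp[OF mupos mudec[OF n] g_lip(2)]) simp
    moreover have "(\<mu> n - \<mu> (Suc n)) * Lg\<^sup>2 / 2 = \<mu> n * K - \<mu> (Suc n) * K"
      by (simp add: K_def field_simps)
    ultimately show ?thesis unfolding Fn by linarith
  qed
  have Psi_step: "\<Psi> (Suc n) + c * \<gamma> n * (r n)\<^sup>2 \<le> \<Psi> n" if n: "n \<ge> 1" for n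
    using Fcmp[OF n, of "x (Suc n)"] descr[OF n] unfolding \<Psi>_def by linarith
  have sumb: "(\<Sum>n=1..N. c * \<gamma> n * (r n)\<^sup>2) \<le> \<Psi> 1 - \<Psi> (Suc N)" for N
  proof (induction N)
    case 0 then show ?case by simp
  next
    case (Suc N)
    have "(\<Sum>n=1..Suc N. c * \<gamma> n * (r n)\<^sup>2) = (\<Sum>n=1..N. c * \<gamma> n * (r n)\<^sup>2) + c * \<gamma> (Suc N) * (r (Suc N))\<^sup>2"
      by simp
    then show ?case using Suc.IH Psi_step[of "Suc N"] by simp
  qed
  have sumb2: "(\<Sum>n=1..N. c * \<gamma> n * (r n)\<^sup>2) \<le> \<Psi> 1 - m0" for N
    using sumb[of N] Psi_lb[of "Suc N"] by simp
  define \<kappa> where "\<kappa> = \<beta> / (w1 / (2 * \<eta>) + w2)"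
  have den: "w1 / (2 * \<eta>) + w2 > 0" using F_lip(1,2) g_wc(1) by (simp add: add_nonneg_pos)
  have kpos: "\<kappa> > 0" unfolding \<kappa>_def using den \<beta> by simp
  have gam_lb: "\<kappa> * \<mu> n \<le> \<gamma> n" if n: "n \<ge> 1" for n
  proof -
    have mp: "0 < \<mu> n" "\<mu> n \<le> 1 / (2 * \<eta>)" using mu_pos n by auto
    have e1: "\<beta> / (w1 + w2 / \<mu> n) = \<beta> * \<mu> n / (w1 * \<mu> n + w2)" using mp(1) by (simp add: field_simps)
    have e2: "\<kappa> * \<mu> n = \<beta> * \<mu> n / (w1 / (2 * \<eta>) + w2)" by (simp add: \<kappa>_def)
    have "w1 * \<mu> n \<le> w1 * (1 / (2 * \<eta>))" using mp(2) F_lip(1) by (rule mult_left_mono)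
    then have le: "w1 * \<mu> n + w2 \<le> w1 / (2 * \<eta>) + w2" by simp
    have p2: "0 < w1 * \<mu> n + w2" using F_lip(1,2) mp(1) by (simp add: add_nonneg_pos)
    have "\<beta> * \<mu> n / (w1 / (2 * \<eta>) + w2) \<le> \<beta> * \<mu> n / (w1 * \<mu> n + w2)"
      by (rule divide_left_mono[OF le]) (use \<beta> mp(1) den p2 in auto)
    then show ?thesis using gamma_bounds n e1 e2 by auto
  qed
  have gpos: "0 < \<gamma> n" if n: "n \<ge> 1" for n
    using gam_lb[OF n] kpos mupos[OF n] by (meson mult_pos_pos less_le_trans)
  have Rr: "R n \<le> r n" if n: "n \<ge> 1" for n
    unfolding R_def r_def by (rule resid_mono[OF phi gpos[OF n]]) (use gamma_bounds n in auto)
  have R0: "0 \<le> R n" for n by (simp add: R_def resid_def)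
  have ge: "0 \<le> liminf (\<lambda>n. ereal (R n))"
    by (rule Liminf_bounded) (simp add: R0)
  have le: "liminf (\<lambda>n. ereal (R n)) \<le> 0"
  proof (rule ccontr)
    assume "\<not> ?thesis"
    then have pos: "0 < liminf (\<lambda>n. ereal (R n))" by simp
    obtain z where z: "0 < z" "z < liminf (\<lambda>n. ereal (R n))" using dense[OF pos] by blast
    then obtain \<epsilon> where ep: "z = ereal \<epsilon>" "0 < \<epsilon>" by (cases z) auto
    have "eventually (\<lambda>n. ereal \<epsilon> < ereal (R n)) sequentially"
      using less_LiminfD[OF z(2)] ep(1) by simp
    then obtain N0 where N0: "\<And>n. n \<ge> N0 \<Longrightarrow> \<epsilon> < R n" by (auto simp: eventually_sequentially)
    define A where "A = c * \<kappa> * \<epsilon>\<^sup>2"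
    have Apos: "A > 0" unfolding A_def using c kpos ep by simp
    have trm: "A * \<mu> n \<le> c * \<gamma> n * (r n)\<^sup>2 + (if n \<in> {..N0} then A * \<mu> n else 0)"
      if n: "n \<ge> 1" for n
    proof (cases "n \<le> N0")
      case True
      have "0 \<le> c * \<gamma> n * (r n)\<^sup>2" using c gpos[OF n] by simp
      then show ?thesis using True by simp
    next
      case False
      then have "\<epsilon> < r n" using N0[of n] Rr[OF n] by simp
      then have "\<epsilon>\<^sup>2 \<le> (r n)\<^sup>2" using ep(2) by (intro power_mono) auto
      then have "(\<kappa> * \<mu> n) * \<epsilon>\<^sup>2 \<le> \<gamma> n * (r n)\<^sup>2"
        using gam_lb[OF n] gpos[OF n] by (intro mult_mono) auto
      then have "c * ((\<kappa> * \<mu> n) * \<epsilon>\<^sup>2) \<le> c * (\<gamma> n * (r n)\<^sup>2)"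
        using c by (intro mult_left_mono) auto
      then show ?thesis using False unfolding A_def by (simp add: algebra_simps)
    qed
    have bnd: "A * (\<Sum>n=1..N. \<mu> n) \<le> (\<Psi> 1 - m0) + A * (\<Sum>n=1..N0. \<mu> n)" for N
    proof -
      have "A * (\<Sum>n=1..N. \<mu> n) = (\<Sum>n=1..N. A * \<mu> n)" by (simp add: sum_distrib_left)
      also have "\<dots> \<le> (\<Sum>n=1..N. c * \<gamma> n * (r n)\<^sup>2 + (if n \<in> {..N0} then A * \<mu> n else 0))"
        by (rule sum_mono) (use trm in auto)
      also have "\<dots> = (\<Sum>n=1..N. c * \<gamma> n * (r n)\<^sup>2) + (\<Sum>n=1..N. (if n \<in> {..N0} then A * \<mu> n else 0))"
        by (simp add: sum.distrib)
      also have "(\<Sum>n=1..N. (if n \<in> {..N0} then A * \<mu> n else 0)) = (\<Sum>n\<in>{1..N} \<inter> {..N0}. A * \<mu> n)"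
        by (rule sym, rule sum.inter_restrict) simp
      also have "\<dots> \<le> (\<Sum>n=1..N0. A * \<mu> n)"
        by (rule sum_mono2) (use Apos mupos in \<open>auto intro!: mult_nonneg_nonneg less_imp_le\<close>)
      also have "\<dots> = A * (\<Sum>n=1..N0. \<mu> n)" by (simp add: sum_distrib_left)
      finally show ?thesis using sumb2[of N] by simp
    qed
    define Bd where "Bd = ((\<Psi> 1 - m0) + A * (\<Sum>n=1..N0. \<mu> n)) / A"
    have "(\<Sum>n=1..N. \<mu> n) \<le> Bd" for N
      using bnd[of N] Apos unfolding Bd_def by (simp add: pos_le_divide_eq mult.commute)
    moreover have "eventually (\<lambda>N. Bd + 1 \<le> (\<Sum>n=1..N. \<mu> n)) sequentially"
      using mu_sum unfolding filterlim_at_top by blast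
    then obtain N where "Bd + 1 \<le> (\<Sum>n=1..N. \<mu> n)" by (auto simp: eventually_sequentially)
    ultimately show False by (smt (verit))
  qed
  show ?thesis using antisym[OF le ge] unfolding R_def by simp
qed

end
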